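(* Let $n\ge 2$, $m_1,\dots,m_n>0$, $f:\mathbb{R}_{>0}\to\mathbb{R}_{>0}$ positive with $\sqrt{x}f(x)$ decreasing, and let $q_k(t)=p(t+h_k)$, $k=1,\dots,n$, be a choreographic solution of $$\ddot q_k=\sum_{j=1,\,j\neq k}^{n} m_j (q_j-q_k)\, f\!\left(\|q_j-q_k\|^2\right),\qquad k\in\{1,\dots,n\},$$ with $\sum_{k=1}^n m_kq_k=0$, for which the curve $p$ has an axis of symmetry. Then for all $l,k\in\{1,\dots,n\}$, $l\neq k$, and all $t$, writing $F(v)=v\,f(\|v\|^2)$: (i) $(m_k-m_l)F\big(p(t+h_l-h_k)-p(t)\big)=\sum_{j\neq k,l} m_j\Big(F\big(p(t+h_j-h_k)-p(t)\big)-F\big(p(t-(h_j-h_l))-p(t)\big)\Big)$; (ii) $(m_k-m_l)F\big(p(t+(h_l-h_k))-p(t)\big)=\sum_{j\neq k,l} m_j\Big(F\big(p(t+(h_j-h_k))-p(t+(h_l-h_k))\big)-F\big(p(t+(h_l-h_j))-p(t+(h_l-h_k))\big)\Big)$; (iii) $(m_k-m_l)\big(p(t+h_l-h_k)-p(t)\big)=\sum_{j\neq k,l} m_j\Big(\big(p(t+h_j-h_k)-p(t)\big)-\big(p(t-(h_j-h_l))-p(t)\big)\Big)$; (iv) $(m_k-m_l)\big(p(t+(h_l-h_k))-p(t)\big)=\sum_{j\neq k,l} m_j\Big(\big(p(t+(h_j-h_k))-p(t+(h_l-h_k))\big)-\big(p(t+(h_l-h_j))-p(t+(h_l-h_k))\big)\Big)$,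 where all sums run over $j\in\{1,\dots,n\}\setminus\{k,l\}$.
   Context: A choreographic solution is one for which there exist a twice continuously differentiable periodic function $p$ and constants $h_1,\dots,h_n$ with $q_k(t)=p(t+h_k)$. The axis of symmetry hypothesis is understood, as in the paper, as: $p$ takes values in $\mathbb{R}^2$ and $p(-t)=\begin{pmatrix}1&0\\0&-1\end{pmatrix}p(t)$ for all $t\in\mathbb{R}$. *)

theory Defs
  imports "HOL-Analysis.Analysis"
begin

definition C2_with :: "(real \<Rightarrow> 'a::real_normed_vector) \<Rightarrow> (real \<Rightarrow> 'a) \<Rightarrow> (real \<Rightarrow> 'a) \<Rightarrow> bool" where
  "C2_with p p' p'' \<longleftrightarrow>
     (\<forall>t. (p has_vector_derivative p' t) (at t)) \<and>
     (\<forall>t. (p' has_vector_derivative p'' t) (at t)) \<and>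
     continuous_on UNIV p''"

definition periodic_fun :: "(real \<Rightarrow> 'a) \<Rightarrow> bool" where
  "periodic_fun p \<longleftrightarrow> (\<exists>T>0. \<forall>t. p (t + T) = p t)"

definition Fforce :: "(real \<Rightarrow> real) \<Rightarrow> real^2 \<Rightarrow> real^2" where
  "Fforce f v = f ((norm v)\<^sup>2) *\<^sub>R v"

text \<open>Choreographic solution q_k(t) = p(t + h_k), k = 1..n, of
  q_k'' = sum_{j /= k} m_j (q_j - q_k) f(|q_j - q_k|^2), collision-free
  (so that f is evaluated only at positive arguments).\<close>
definition choreographic_solution ::
  "nat \<Rightarrow> (nat \<Rightarrow> real) \<Rightarrow> (real \<Rightarrow> real) \<Rightarrow> (real \<Rightarrow> real^2) \<Rightarrow> (nat \<Rightarrow> real) \<Rightarrow> bool" where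
  "choreographic_solution n m f p h \<longleftrightarrow>
     periodic_fun p \<and>
     (\<exists>p' p''. C2_with p p' p'' \<and>
        (\<forall>k\<in>{1..n}. \<forall>t.
           p'' (t + h k) = (\<Sum>j\<in>{1..n} - {k}. m j *\<^sub>R Fforce f (p (t + h j) - p (t + h k))))) \<and>
     (\<forall>k\<in>{1..n}. \<forall>j\<in>{1..n}. j \<noteq> k \<longrightarrow> (\<forall>t. p (t + h j) \<noteq> p (t + h k)))"

definition refl_mat :: "real^2^2" where
  "refl_mat = vector [vector [1, 0], vector [0, -1]]"

definition axis_symmetric :: "(real \<Rightarrow> real^2) \<Rightarrow> bool" where
  "axis_symmetric p \<longleftrightarrow> (\<forall>t. p (- t) = refl_mat *v p t)"

end

theory Submission
  imports Defs
begin

lemma refl_deriv: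
  fixes p p' :: "real \<Rightarrow> 'a::real_normed_vector"
  assumes bl: "bounded_linear r" and ps: "\<forall>t. p (- t) = r (p t)"
    and d: "\<forall>t. (p has_vector_derivative p' t) (at t)"
  shows "p' (- t) = - r (p' t)"
proof -
  have e: "(p \<circ> uminus) = (\<lambda>t. r (p t))" using ps by auto
  have "(uminus has_vector_derivative (-1)) (at t)"
    by (auto intro!: derivative_eq_intros simp: has_real_derivative_iff_has_vector_derivative[symmetric])
  then have a: "((p \<circ> uminus) has_vector_derivative ((-1) *\<^sub>R p' (- t))) (at t)"
    using d vector_diff_chain_at by fastforce
  have b: "((\<lambda>t. r (p t)) has_vector_derivative r (p' t)) (at t)"
    using bounded_linear.has_vector_derivative[OF bl d[rule_format]] .
  from vector_derivative_unique_at[OF a b[folded e]] show ?thesis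
    by (metis add.inverse_inverse scaleR_minus1_left)
qed

definition rr :: "real^2 \<Rightarrow> real^2" where "rr v = refl_mat *v v"

lemma rr_comp: "rr v $ 1 = v $ 1" "rr v $ 2 = - v $ 2"
  by (simp_all add: rr_def refl_mat_def matrix_vector_mult_def sum_2 vector_def)

lemma rr_eq: "rr v = (\<chi> i. if i = 1 then v $ 1 else - v $ 2)"
  by (simp add: vec_eq_iff forall_2 rr_comp)

lemma rr_rr[simp]: "rr (rr v) = v"
  by (simp add: vec_eq_iff forall_2 rr_comp)

lemma rr_lin: "linear rr" unfolding rr_def by simp
lemma rr_bl: "bounded_linear rr" using rr_lin by (simp add: linear_conv_bounded_linear)

lemma norm_rr[simp]: "norm (rr v) = norm v"
  by (simp add: norm_vec_def L2_set_def sum_2 rr_comp)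

lemma F_rr: "Fforce f (rr v) = rr (Fforce f v)"
  by (simp add: Fforce_def vec_eq_iff forall_2 rr_comp)

lemma F_neg: "Fforce f (- v) = - Fforce f v"
  by (simp add: Fforce_def)

lemma rr_diff: "rr (a - b) = rr a - rr b" by (simp add: vec_eq_iff forall_2 rr_comp)
lemma rr_scale: "rr (c *\<^sub>R a) = c *\<^sub>R rr a" by (simp add: vec_eq_iff forall_2 rr_comp)
lemma rr_sum: "rr (sum g A) = (\<Sum>x\<in>A. rr (g x))" using linear_sum[OF rr_lin] .
lemma rr_zero: "rr 0 = 0" by (simp add: vec_eq_iff forall_2 rr_comp)
lemma rr_neg: "rr (- a) = - rr a" by (simp add: vec_eq_iff forall_2 rr_comp)
lemma rr_inj: "rr a = rr b \<Longrightarrow> a = b" by (metis rr_rr)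

lemma split1:
  assumes "l \<in> {1..n}" "k \<in> {1..n}" "l \<noteq> k"
  shows "(\<Sum>j\<in>{1..n::nat} - {k}. g j) = g l + (\<Sum>j\<in>{1..n} - {k, l}. g j)"
proof -
  have "{1..n} - {k} = insert l ({1..n} - {k, l})" using assms by auto
  then show ?thesis by simp
qed

lemma split2:
  assumes "l \<in> {1..n}" "k \<in> {1..n}" "l \<noteq> k"
  shows "(\<Sum>j\<in>{1..n::nat}. g j) = g k + g l + (\<Sum>j\<in>{1..n} - {k, l}. g j)"
proof -
  define R where "R = {1..n} - {k, l}"
  have e: "{1..n} = insert k (insert l R)" using assms by (auto simp: R_def)
  have "k \<notin> insert l R" "l \<notin> R" "finite R" using assms by (auto simp: R_def)
  then have "sum g (insert k (insert l R)) = g k + g l + sum g R" by (simp add: add.assoc)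
  then show ?thesis using e R_def by metis
qed

lemma alg2:
  fixes P B S1 S2 :: "'a::real_vector"
  assumes "0 = mk *\<^sub>R P + ml *\<^sub>R B + S1" "0 = mk *\<^sub>R B + ml *\<^sub>R P + S2"
  shows "S1 - S2 = (mk - ml) *\<^sub>R (B - P)"
proof -
  have h1: "S1 = 0 - (mk *\<^sub>R P + ml *\<^sub>R B)" using assms(1) by (metis add.commute eq_diff_eq)
  have h2: "S2 = 0 - (mk *\<^sub>R B + ml *\<^sub>R P)" using assms(2) by (metis add.commute eq_diff_eq)
  show ?thesis by (subst h1, subst h2) (simp add: algebra_simps)
qed

lemma alg:
  fixes A S1 S2 a :: "'a::real_vector"
  assumes "a = ml *\<^sub>R A + S1" "a = mk *\<^sub>R A + S2"
  shows "(mk - ml) *\<^sub>R A = S1 - S2"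
proof -
  have h1: "S1 = a - ml *\<^sub>R A" using assms(1) by simp
  have h2: "S2 = a - mk *\<^sub>R A" using assms(2) by simp
  have "S1 - S2 = (a - ml *\<^sub>R A) - (a - mk *\<^sub>R A)" by (subst h1, subst h2, rule refl)
  also have "\<dots> = (mk - ml) *\<^sub>R A" by (simp add: algebra_simps)
  finally show ?thesis by simp
qed

theorem lemma2:
  fixes n :: nat and m :: "nat \<Rightarrow> real" and f :: "real \<Rightarrow> real"
    and p :: "real \<Rightarrow> real^2" and h :: "nat \<Rightarrow> real"
  assumes n2: "n \<ge> 2"
    and mpos: "\<forall>k\<in>{1..n}. m k > 0"
    and fpos: "\<forall>x>0. f x > 0"
    and fdec: "\<forall>x y. 0 < x \<and> x < y \<longrightarrow> sqrt y * f y < sqrt x * f x"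
    and sol: "choreographic_solution n m f p h"
    and com: "\<forall>t. (\<Sum>k=1..n. m k *\<^sub>R p (t + h k)) = 0"
    and sym: "axis_symmetric p"
    and l: "l \<in> {1..n}" and k: "k \<in> {1..n}" and lk: "l \<noteq> k"
  shows
   "(\<forall>t. (m k - m l) *\<^sub>R Fforce f (p (t + h l - h k) - p t)
        = (\<Sum>j\<in>{1..n} - {k, l}. m j *\<^sub>R
            (Fforce f (p (t + h j - h k) - p t) - Fforce f (p (t - (h j - h l)) - p t)))) \<and>
   (\<forall>t. (m k - m l) *\<^sub>R Fforce f (p (t + (h l - h k)) - p t)
        = (\<Sum>j\<in>{1..n} - {k, l}. m j *\<^sub>R
            (Fforce f (p (t + (h j - h k)) - p (t + (h l - h k)))
             - Fforce f (p (t + (h l - h j)) - p (t + (h l - h k)))))) \<and>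
   (\<forall>t. (m k - m l) *\<^sub>R (p (t + h l - h k) - p t)
        = (\<Sum>j\<in>{1..n} - {k, l}. m j *\<^sub>R
            ((p (t + h j - h k) - p t) - (p (t - (h j - h l)) - p t)))) \<and>
   (\<forall>t. (m k - m l) *\<^sub>R (p (t + (h l - h k)) - p t)
        = (\<Sum>j\<in>{1..n} - {k, l}. m j *\<^sub>R
            ((p (t + (h j - h k)) - p (t + (h l - h k)))
             - (p (t + (h l - h j)) - p (t + (h l - h k))))))"
proof -
  obtain p' p'' where c2: "C2_with p p' p''" and eq: "\<forall>k\<in>{1..n}. \<forall>t.
           p'' (t + h k) = (\<Sum>j\<in>{1..n} - {k}. m j *\<^sub>R Fforce f (p (t + h j) - p (t + h k)))"
    using sol unfolding choreographic_solution_def by blast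
  have d1: "\<forall>t. (p has_vector_derivative p' t) (at t)" and d2: "\<forall>t. (p' has_vector_derivative p'' t) (at t)"
    using c2 unfolding C2_with_def by auto
  have ps: "\<forall>t. p (- t) = rr (p t)" using sym unfolding axis_symmetric_def rr_def by auto
  have ps1: "\<forall>t. p' (- t) = - rr (p' t)" using refl_deriv[OF rr_bl ps d1] by auto
  have blm: "bounded_linear (\<lambda>x. - rr x)" using rr_bl bounded_linear_minus by blast
  have ps2: "\<forall>t. p'' (- t) = rr (p'' t)" using refl_deriv[OF blm ps1 d2] by auto
  have E1: "p'' s = (\<Sum>j\<in>{1..n} - {k}. m j *\<^sub>R Fforce f (p (s + h j - h k) - p s))"
    if "k \<in> {1..n}" for k s
  proof -
    have "p'' (s - h k + h k) = (\<Sum>j\<in>{1..n} - {k}. m j *\<^sub>R Fforce f (p (s - h k + h j) - p (s - h k + h k)))"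
      using eq that by blast
    then show ?thesis by (simp add: algebra_simps)
  qed
  have E2: "p'' s = (\<Sum>j\<in>{1..n} - {k}. m j *\<^sub>R Fforce f (p (s - (h j - h k)) - p s))"
    if "k \<in> {1..n}" for k s
  proof -
    have a: "p (- s + h j - h k) = rr (p (s - (h j - h k)))" for j
      using ps[rule_format, of "s - (h j - h k)"] by (simp add: algebra_simps)
    have "rr (p'' s) = (\<Sum>j\<in>{1..n} - {k}. m j *\<^sub>R Fforce f (p (- s + h j - h k) - p (- s)))"
      using E1[OF that, of "- s"] ps2 by simp
    also have "\<dots> = rr (\<Sum>j\<in>{1..n} - {k}. m j *\<^sub>R Fforce f (p (s - (h j - h k)) - p s))"
      unfolding rr_sum by (rule sum.cong[OF refl]) (simp only: a ps rr_scale F_rr rr_diff[symmetric])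
    finally show ?thesis by (rule rr_inj)
  qed
  have C1: "(\<Sum>j\<in>{1..n}. m j *\<^sub>R p (s + h j - h k)) = 0" for k s
  proof -
    have "(\<Sum>j\<in>{1..n}. m j *\<^sub>R p (s - h k + h j)) = 0" using com by blast
    then show ?thesis by (simp add: algebra_simps)
  qed
  have C2: "(\<Sum>j\<in>{1..n}. m j *\<^sub>R p (s - (h j - h k))) = 0" for k s
  proof -
    have a: "p (- s - h k + h j) = rr (p (s - (h j - h k)))" for j
      using ps[rule_format, of "s - (h j - h k)"] by (simp add: algebra_simps)
    have "(\<Sum>j\<in>{1..n}. m j *\<^sub>R p (- s - h k + h j)) = 0" using com by blast
    then have "rr (\<Sum>j\<in>{1..n}. m j *\<^sub>R p (s - (h j - h k))) = rr 0"
      by (simp add: a rr_sum rr_scale rr_zero)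
    then show ?thesis by (rule rr_inj)
  qed
  have P1: "(m k - m l) *\<^sub>R Fforce f (p (t + h l - h k) - p t)
        = (\<Sum>j\<in>{1..n} - {k, l}. m j *\<^sub>R
            (Fforce f (p (t + h j - h k) - p t) - Fforce f (p (t - (h j - h l)) - p t)))" for t
  proof -
    have a1: "p'' t = m l *\<^sub>R Fforce f (p (t + h l - h k) - p t) + (\<Sum>j\<in>{1..n} - {k, l}. m j *\<^sub>R Fforce f (p (t + h j - h k) - p t))"
      using E1[OF k, of t] split1[OF l k lk] by simp
    have a2: "p'' t = m k *\<^sub>R Fforce f (p (t + h l - h k) - p t) + (\<Sum>j\<in>{1..n} - {k, l}. m j *\<^sub>R Fforce f (p (t - (h j - h l)) - p t))"
      using E2[OF l, of t] split1[OF k l lk[symmetric], of "\<lambda>j. m j *\<^sub>R Fforce f (p (t - (h j - h l)) - p t)"]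
      by (simp add: insert_commute algebra_simps)
    show ?thesis using alg[OF a1 a2] by (simp add: scaleR_right_diff_distrib sum_subtractf)
  qed
  have P2: "(m k - m l) *\<^sub>R Fforce f (p (t + (h l - h k)) - p t)
        = (\<Sum>j\<in>{1..n} - {k, l}. m j *\<^sub>R
            (Fforce f (p (t + (h j - h k)) - p (t + (h l - h k)))
             - Fforce f (p (t + (h l - h j)) - p (t + (h l - h k)))))" for t
  proof -
    define s where "s = t + (h l - h k)"
    have r1: "s + h k - h l = t" "s - (h l - h k) = t" by (simp_all add: s_def)
    have r2: "s + h j - h l = t + (h j - h k)" "s - (h j - h k) = t + (h l - h j)" for j
      by (simp_all add: s_def)
    have a1: "p'' s = m k *\<^sub>R Fforce f (p t - p s) + (\<Sum>j\<in>{1..n} - {k, l}. m j *\<^sub>R Fforce f (p (t + (h j - h k)) - p s))"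
      using E1[OF l, of s] split1[OF k l lk[symmetric], of "\<lambda>j. m j *\<^sub>R Fforce f (p (s + h j - h l) - p s)"]
      by (simp add: insert_commute r1 r2)
    have a2: "p'' s = m l *\<^sub>R Fforce f (p t - p s) + (\<Sum>j\<in>{1..n} - {k, l}. m j *\<^sub>R Fforce f (p (t + (h l - h j)) - p s))"
      using E2[OF k, of s] split1[OF l k lk, of "\<lambda>j. m j *\<^sub>R Fforce f (p (s - (h j - h k)) - p s)"]
      by (simp add: r1 r2)
    have "(m l - m k) *\<^sub>R Fforce f (p t - p s) = (\<Sum>j\<in>{1..n} - {k, l}. m j *\<^sub>R
            (Fforce f (p (t + (h j - h k)) - p s) - Fforce f (p (t + (h l - h j)) - p s)))"
      using alg[OF a1 a2] by (simp add: scaleR_right_diff_distrib sum_subtractf)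
    moreover have "Fforce f (p t - p s) = - Fforce f (p s - p t)"
      using F_neg[of f "p s - p t"] by simp
    ultimately show ?thesis unfolding s_def by (simp add: algebra_simps)
  qed
  have P3core: "(\<Sum>j\<in>{1..n} - {k, l}. m j *\<^sub>R (p (t + h j - h k) - p (t - (h j - h l))))
      = (m k - m l) *\<^sub>R (p (t + h l - h k) - p t)" for t
  proof -
    have c1: "0 = m k *\<^sub>R p t + m l *\<^sub>R p (t + h l - h k) + (\<Sum>j\<in>{1..n} - {k, l}. m j *\<^sub>R p (t + h j - h k))"
      using C1[of t k] split2[OF l k lk, of "\<lambda>j. m j *\<^sub>R p (t + h j - h k)"] by simp
    have e: "t - (h k - h l) = t + h l - h k" by simp
    have c2: "0 = m k *\<^sub>R p (t + h l - h k) + m l *\<^sub>R p t + (\<Sum>j\<in>{1..n} - {k, l}. m j *\<^sub>R p (t - (h j - h l)))"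
      using C2[of t l] split2[OF l k lk, of "\<lambda>j. m j *\<^sub>R p (t - (h j - h l))"] by (simp only: e diff_self diff_zero)
    show ?thesis using alg2[OF c1 c2] by (simp add: scaleR_right_diff_distrib sum_subtractf)
  qed
  have P3: "(m k - m l) *\<^sub>R (p (t + h l - h k) - p t)
        = (\<Sum>j\<in>{1..n} - {k, l}. m j *\<^sub>R
            ((p (t + h j - h k) - p t) - (p (t - (h j - h l)) - p t)))" for t
    using P3core[of t] by simp
  have P4: "(m k - m l) *\<^sub>R (p (t + (h l - h k)) - p t)
        = (\<Sum>j\<in>{1..n} - {k, l}. m j *\<^sub>R
            ((p (t + (h j - h k)) - p (t + (h l - h k)))
             - (p (t + (h l - h j)) - p (t + (h l - h k)))))" for t
  proof -
    have r: "t + (h l - h k) = t + h l - h k" "\<And>j. t + (h j - h k) = t + h j - h k"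
      "\<And>j. t + (h l - h j) = t - (h j - h l)" by simp_all
    show ?thesis unfolding r using P3core[of t] by simp
  qed
  show ?thesis using P1 P2 P3 P4 by blast
qed

end
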